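(* For every integer $n\ge5$, the polynomial $a_n$ lies in $\mathbb{Z}[T_3,\dots,T_{n-1}]$, is homogeneous of degree $2$, and the quadratic form it defines on $\mathbb{R}^{n-3}$ (identifying the coordinates with $T_3,\dots,T_{n-1}$) is non-degenerate.
   Context: Let $T_1,T_2,\dots$ be indeterminates. Define linear operators $L,H$ on monomials (constants sent to $0$): $L(T_{\alpha_1}\cdots T_{\alpha_r})=\sum_{1\le i<j\le r}T_{\alpha_1}\cdots T_{\alpha_i+1}\cdots T_{\alpha_j+1}\cdots T_{\alpha_r}$, $H(T_{\alpha_1}\cdots T_{\alpha_r})=-\frac12\sum_{k=1}^{r}\sum_{l=1}^{\alpha_k-1}\binom{\alpha_k}{l}T_{1+l}T_{1+\alpha_k-l}\prod_{i\ne k}T_{\alpha_i}$. For $n\ge2$ let $A_n=-\sum_{k=1}^{n-1}\binom{n}{k}T_{1+k}T_{1+n-k}T_n$; set $R_2=0$, $R_{n+1}=A_n+L(R_n)+H(R_n)$. For $n\ge3$ write $R_{n+1}=\sum_{j\ge0}P_jT_n^j$ with the $P_j$ not involving $T_n$, and set $a_n:=P_1$. *)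

theory Defs
  imports Main "HOL-Library.Multiset" "HOL-Library.Poly_Mapping" Complex_Main
begin

text \<open>Polynomials in the indeterminates T_1, T_2, ... with rational coefficients.
  A monomial T_{a_1} ... T_{a_r} is represented by the multiset of its indices
  {#a_1,...,a_r#}; a polynomial is a finitely supported map from monomials to
  coefficients.\<close>

type_synonym tpoly = "nat multiset \<Rightarrow>\<^sub>0 rat"

definition lin_ext :: "(nat multiset \<Rightarrow> rat \<Rightarrow> tpoly) \<Rightarrow> tpoly \<Rightarrow> tpoly" where
  "lin_ext f p = (\<Sum>m\<in>Poly_Mapping.keys p. f m (Poly_Mapping.lookup p m))"

definition L_mono :: "nat multiset \<Rightarrow> rat \<Rightarrow> tpoly" where
  "L_mono m c = (let xs = sorted_list_of_multiset m in
     (\<Sum>j<length xs. \<Sum>i<j.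
        Poly_Mapping.single (mset (xs[i := xs!i + 1, j := xs!j + 1])) c))"

definition H_mono :: "nat multiset \<Rightarrow> rat \<Rightarrow> tpoly" where
  "H_mono m c = (let xs = sorted_list_of_multiset m in
     (\<Sum>k<length xs. \<Sum>l\<in>{1..<xs!k}.
        Poly_Mapping.single (m - {#xs!k#} + {#1 + l, 1 + xs!k - l#})
          (- (1/2) * of_nat (xs!k choose l) * c)))"

definition L_op :: "tpoly \<Rightarrow> tpoly" where "L_op = lin_ext L_mono"
definition H_op :: "tpoly \<Rightarrow> tpoly" where "H_op = lin_ext H_mono"

definition A_poly :: "nat \<Rightarrow> tpoly" where
  "A_poly n = (\<Sum>k\<in>{1..n-1}.
      Poly_Mapping.single {#1 + k, 1 + n - k, n#} (- of_nat (n choose k)))"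

primrec R_poly :: "nat \<Rightarrow> tpoly" where
  "R_poly 0 = 0"
| "R_poly (Suc n) = (if n < 2 then 0 else A_poly n + L_op (R_poly n) + H_op (R_poly n))"

text \<open>a_n = P_1, the coefficient of T_n^1 in R_{n+1} viewed as a polynomial in T_n.\<close>
definition a_poly :: "nat \<Rightarrow> tpoly" where
  "a_poly n = (let p = R_poly (Suc n) in
     (\<Sum>m\<in>{m\<in>Poly_Mapping.keys p. count m n = 1}. Poly_Mapping.single (m - {#n#}) (Poly_Mapping.lookup p m)))"

definition eval_tpoly :: "tpoly \<Rightarrow> (nat \<Rightarrow> real) \<Rightarrow> real" where
  "eval_tpoly p x = (\<Sum>m\<in>Poly_Mapping.keys p. of_rat (Poly_Mapping.lookup p m) * (\<Prod>i\<in>#m. x i))"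

definition polar_form :: "tpoly \<Rightarrow> (nat \<Rightarrow> real) \<Rightarrow> (nat \<Rightarrow> real) \<Rightarrow> real" where
  "polar_form p x y = (eval_tpoly p (\<lambda>i. x i + y i) - eval_tpoly p x - eval_tpoly p y) / 2"

text \<open>Non-degeneracy of the quadratic form of p on the real space with coordinates
  indexed by I (vectors are functions vanishing outside I): the radical is trivial.\<close>
definition nondegenerate_on :: "nat set \<Rightarrow> tpoly \<Rightarrow> bool" where
  "nondegenerate_on I p \<longleftrightarrow>
     (\<forall>x. (\<forall>i. i \<notin> I \<longrightarrow> x i = 0) \<longrightarrow>
        (\<forall>y. (\<forall>i. i \<notin> I \<longrightarrow> y i = 0) \<longrightarrow> polar_form p x y = 0) \<longrightarrow>
        (\<forall>i. x i = 0))"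

end

theory Submission
  imports Defs
begin

lemma keys_lin_ext:
  "Poly_Mapping.keys (lin_ext f p) \<subseteq> (\<Union>m\<in>Poly_Mapping.keys p. Poly_Mapping.keys (f m (Poly_Mapping.lookup p m)))"
  unfolding lin_ext_def by (rule keys_sum)

lemma lookup_lin_ext:
  "Poly_Mapping.lookup (lin_ext f p) M = (\<Sum>m\<in>Poly_Mapping.keys p. Poly_Mapping.lookup (f m (Poly_Mapping.lookup p m)) M)"
  unfolding lin_ext_def by (rule lookup_sum)

lemma keys_sum_single:
  "Poly_Mapping.keys (\<Sum>x\<in>X. Poly_Mapping.single (g x) (c x)) \<subseteq> g ` X"
  using keys_sum[of "\<lambda>x. Poly_Mapping.single (g x) (c x)" X] by (auto split: if_splits)

lemma L_mono_keys:
  assumes "M' \<in> Poly_Mapping.keys (L_mono M c)"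
  shows "size M' = size M \<and> sum_mset M' = sum_mset M + 2 \<and> (\<forall>i\<in>#M'. \<exists>j\<in>#M. j \<le> i \<and> i \<le> j+1)"
proof -
  define xs where "xs = sorted_list_of_multiset M"
  have Mx: "mset xs = M" by (simp add: xs_def)
  have "M' \<in> Poly_Mapping.keys (\<Sum>j<length xs. \<Sum>i<j. Poly_Mapping.single (mset (xs[i := xs!i + 1, j := xs!j + 1])) c)"
    using assms unfolding L_mono_def xs_def Let_def by assumption
  then have "M' \<in> (\<Union>j\<in>{..<length xs}. Poly_Mapping.keys (\<Sum>i<j. Poly_Mapping.single (mset (xs[i := xs!i + 1, j := xs!j + 1])) c))"
    by (rule subsetD[OF keys_sum])
  then obtain j where j: "j < length xs" and "M' \<in> Poly_Mapping.keys (\<Sum>i<j. Poly_Mapping.single (mset (xs[i := xs!i + 1, j := xs!j + 1])) c)"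
    by blast
  from this(2) have "M' \<in> (\<lambda>i. mset (xs[i := xs!i + 1, j := xs!j + 1])) ` {..<j}"
    by (rule subsetD[OF keys_sum_single])
  then obtain i where i: "i < j" and M': "M' = mset (xs[i := xs!i + 1, j := xs!j + 1])"
    by blast
  define ys where "ys = xs[i := xs!i + 1]"
  have il: "i < length xs" using i j by simp
  have ysj: "ys ! j = xs ! j" using i by (simp add: ys_def)
  have mys: "mset ys = add_mset (xs!i+1) (M - {#xs!i#})" using il Mx by (simp add: ys_def mset_update)
  have mM': "M' = add_mset (xs!j+1) (mset ys - {#xs!j#})"
  proof -
    have "M' = mset (ys[j := xs!j+1])" using M' by (simp add: ys_def)
    also have "\<dots> = add_mset (xs!j+1) (mset ys - {#ys!j#})" using j by (simp add: ys_def mset_update)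
    finally show ?thesis using ysj by simp
  qed
  have xi: "xs!i \<in># M" using il Mx by (metis nth_mem set_mset_mset)
  have xj: "xs!j \<in># mset ys" using j ysj by (metis length_list_update nth_mem set_mset_mset ys_def)
  have s1: "size M' = size M" unfolding M' Mx[symmetric] by simp
  have sumys: "sum_mset (mset ys) = sum_mset M + 1"
  proof -
    define N where "N = M - {#xs!i#}"
    have MN: "M = add_mset (xs!i) N" using xi by (simp add: N_def)
    have "mset ys = add_mset (xs!i+1) N" using mys by (simp add: N_def)
    then show ?thesis using MN by simp
  qed
  have "sum_mset M' = sum_mset (mset ys) + 1"
  proof -
    define N where "N = mset ys - {#xs!j#}"
    have MN: "mset ys = add_mset (xs!j) N" using xj by (simp add: N_def)
    have "M' = add_mset (xs!j+1) N" using mM' by (simp add: N_def)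
    then show ?thesis using MN by simp
  qed
  with sumys have s2: "sum_mset M' = sum_mset M + 2" by simp
  have s3: "\<forall>x\<in>#M'. \<exists>y\<in>#M. y \<le> x \<and> x \<le> y+1"
  proof
    fix x assume "x \<in># M'"
    then have "x \<in> set (xs[i := xs!i + 1, j := xs!j + 1])" using M' by simp
    then obtain k where k: "k < length xs" and xk: "x = (xs[i := xs!i + 1, j := xs!j + 1]) ! k"
      by (auto simp: in_set_conv_nth)
    have "xs!k \<in># M" using k Mx by (metis nth_mem set_mset_mset)
    moreover have "xs!k \<le> x \<and> x \<le> xs!k+1" using xk k il j by (auto simp: nth_list_update)
    ultimately show "\<exists>y\<in>#M. y \<le> x \<and> x \<le> y+1" by blast
  qed
  show ?thesis using s1 s2 s3 by blast
qed

lemma H_mono_keys: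
  assumes "M' \<in> Poly_Mapping.keys (H_mono M c)"
  shows "\<exists>a\<in>#M. \<exists>l. 1 \<le> l \<and> l < a \<and> M' = M - {#a#} + {#1+l, 1+a-l#}"
proof -
  define xs where "xs = sorted_list_of_multiset M"
  have Mx: "mset xs = M" by (simp add: xs_def)
  have "M' \<in> Poly_Mapping.keys (\<Sum>k<length xs. \<Sum>l\<in>{1..<xs!k}.
        Poly_Mapping.single (M - {#xs!k#} + {#1 + l, 1 + xs!k - l#}) (- (1/2) * of_nat (xs!k choose l) * c))"
    using assms unfolding H_mono_def xs_def Let_def by assumption
  then have "M' \<in> (\<Union>k\<in>{..<length xs}. Poly_Mapping.keys (\<Sum>l\<in>{1..<xs!k}.
        Poly_Mapping.single (M - {#xs!k#} + {#1 + l, 1 + xs!k - l#}) (- (1/2) * of_nat (xs!k choose l) * c)))"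
    by (rule subsetD[OF keys_sum])
  then obtain k where k: "k < length xs" and "M' \<in> Poly_Mapping.keys (\<Sum>l\<in>{1..<xs!k}.
        Poly_Mapping.single (M - {#xs!k#} + {#1 + l, 1 + xs!k - l#}) (- (1/2) * of_nat (xs!k choose l) * c))"
    by blast
  from this(2) have "M' \<in> (\<lambda>l. M - {#xs!k#} + {#1 + l, 1 + xs!k - l#}) ` {1..<xs!k}"
    by (rule subsetD[OF keys_sum_single])
  then obtain l where "l \<in> {1..<xs!k}" "M' = M - {#xs!k#} + {#1 + l, 1 + xs!k - l#}"
    by blast
  then have l: "1 \<le> l" "l < xs!k" and M': "M' = M - {#xs!k#} + {#1 + l, 1 + xs!k - l#}" by auto
  have "xs!k \<in># M" using k Mx by (metis nth_mem set_mset_mset)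
  then show ?thesis using l M' by blast
qed

definition goodmon :: "nat \<Rightarrow> nat multiset \<Rightarrow> bool" where
  "goodmon m M \<longleftrightarrow> 3 \<le> size M \<and> (\<forall>i\<in>#M. 2 \<le> i \<and> i + size M \<le> m + 2) \<and> sum_mset M = 2*m"

definition npr :: "rat \<Rightarrow> bool" where "npr q \<longleftrightarrow> q \<in> \<int> \<and> q \<le> 0"

definition Rinv :: "nat \<Rightarrow> tpoly \<Rightarrow> bool" where
  "Rinv m p \<longleftrightarrow> (\<forall>M\<in>Poly_Mapping.keys p. goodmon m M) \<and>
     (\<forall>M. size M = 3 \<longrightarrow> npr (Poly_Mapping.lookup p M))"

lemma npr_sum: "(\<And>x. x \<in> X \<Longrightarrow> npr (Poly_Mapping.lookup (f x) M)) \<Longrightarrow> npr (Poly_Mapping.lookup (sum f X) M)"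
  unfolding npr_def lookup_sum by (auto intro: sum_nonpos Ints_sum)

lemma npr_single: "npr c \<Longrightarrow> npr (Poly_Mapping.lookup (Poly_Mapping.single k c) M)"
  unfolding npr_def lookup_single by (auto simp: when_def)

lemma npr_0: "npr 0" by (simp add: npr_def)

lemma npr_add: "npr a \<Longrightarrow> npr b \<Longrightarrow> npr (a + b)" by (auto simp: npr_def)

lemma npr_L_mono: "npr c \<Longrightarrow> npr (Poly_Mapping.lookup (L_mono m c) M)"
  unfolding L_mono_def Let_def by (intro npr_sum npr_single)

lemma npr_A: "npr (Poly_Mapping.lookup (A_poly n) M)"
  unfolding A_poly_def by (intro npr_sum npr_single) (simp add: npr_def)

lemma L_good: assumes "goodmon m M" "M' \<in> Poly_Mapping.keys (L_mono M c)" shows "goodmon (Suc m) M'"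
proof -
  have k: "size M' = size M" "sum_mset M' = sum_mset M + 2" "\<forall>i\<in>#M'. \<exists>j\<in>#M. j \<le> i \<and> i \<le> j+1"
    using L_mono_keys[OF assms(2)] by auto
  have g: "3 \<le> size M" "\<forall>i\<in>#M. 2 \<le> i \<and> i + size M \<le> m + 2" "sum_mset M = 2*m"
    using assms(1) unfolding goodmon_def by auto
  have el: "\<forall>i\<in>#M'. 2 \<le> i \<and> i + size M' \<le> Suc m + 2"
  proof
    fix i assume "i \<in># M'"
    then obtain j where "j \<in># M" "j \<le> i" "i \<le> j+1" using k(3) by blast
    then show "2 \<le> i \<and> i + size M' \<le> Suc m + 2" using g(2) k(1) by fastforce
  qed
  show ?thesis unfolding goodmon_def using el k g by simp
qed

lemma H_good: assumes "goodmon m M" "M' \<in> Poly_Mapping.keys (H_mono M c)" shows "goodmon (Suc m) M'"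
proof -
  obtain a l where a: "a \<in># M" and l: "1 \<le> l" "l < a" and M': "M' = M - {#a#} + {#1+l, 1+a-l#}"
    using H_mono_keys[OF assms(2)] by blast
  define N where "N = M - {#a#}"
  have MN: "M = add_mset a N" using a by (simp add: N_def)
  have M'N: "M' = N + {#1+l, 1+a-l#}" using M' by (simp add: N_def)
  have sz: "size M' = size M + 1" using MN M'N by simp
  have sm: "sum_mset M' = sum_mset M + 2" using MN M'N l by simp
  have g: "3 \<le> size M" "\<forall>i\<in>#M. 2 \<le> i \<and> i + size M \<le> m + 2" "sum_mset M = 2*m"
    using assms(1) unfolding goodmon_def by auto
  have el: "\<forall>i\<in>#M'. 2 \<le> i \<and> i + size M' \<le> Suc m + 2"
  proof
    fix i assume "i \<in># M'"
    then have "i \<in># M \<or> i = 1+l \<or> i = 1+a-l" using M' by (auto dest: in_diffD)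
    moreover have "2 \<le> a \<and> a + size M \<le> m + 2" using g(2) a by blast
    ultimately show "2 \<le> i \<and> i + size M' \<le> Suc m + 2" using g(2) sz l by auto
  qed
  show ?thesis unfolding goodmon_def using el sz sm g by simp
qed

lemma H_size: assumes "M' \<in> Poly_Mapping.keys (H_mono M c)" shows "size M' = Suc (size M)"
proof -
  obtain a l where a: "a \<in># M" and M': "M' = M - {#a#} + {#1+l, 1+a-l#}"
    using H_mono_keys[OF assms] by blast
  have MN: "M = add_mset a (M - {#a#})" using a by simp
  show ?thesis using M' by (subst MN) simp
qed

lemma A_good: assumes "M \<in> Poly_Mapping.keys (A_poly n)" "2 \<le> n" shows "goodmon (Suc n) M"
proof -
  have "M \<in> (\<lambda>k. {#1 + k, 1 + n - k, n#}) ` {1..n-1}"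
    using assms(1) unfolding A_poly_def by (rule subsetD[OF keys_sum_single])
  then obtain k where k: "1 \<le> k" "k \<le> n - 1" and M: "M = {#1 + k, 1 + n - k, n#}" by auto
  show ?thesis unfolding goodmon_def M using k assms(2) by auto
qed

lemma keys_L: assumes "\<forall>M\<in>Poly_Mapping.keys p. goodmon n M" "M \<in> Poly_Mapping.keys (L_op p)"
  shows "goodmon (Suc n) M"
proof -
  have "M \<in> (\<Union>m\<in>Poly_Mapping.keys p. Poly_Mapping.keys (L_mono m (Poly_Mapping.lookup p m)))"
    using assms(2) unfolding L_op_def by (rule subsetD[OF keys_lin_ext])
  then obtain m where m: "m \<in> Poly_Mapping.keys p" and "M \<in> Poly_Mapping.keys (L_mono m (Poly_Mapping.lookup p m))"
    by blast
  from L_good[OF bspec[OF assms(1) m] this(2)] show ?thesis .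
qed

lemma keys_H: assumes "\<forall>M\<in>Poly_Mapping.keys p. goodmon n M" "M \<in> Poly_Mapping.keys (H_op p)"
  shows "goodmon (Suc n) M"
proof -
  have "M \<in> (\<Union>m\<in>Poly_Mapping.keys p. Poly_Mapping.keys (H_mono m (Poly_Mapping.lookup p m)))"
    using assms(2) unfolding H_op_def by (rule subsetD[OF keys_lin_ext])
  then obtain m where m: "m \<in> Poly_Mapping.keys p" and "M \<in> Poly_Mapping.keys (H_mono m (Poly_Mapping.lookup p m))"
    by blast
  from H_good[OF bspec[OF assms(1) m] this(2)] show ?thesis .
qed

lemma npr_L: assumes "\<forall>M. size M = 3 \<longrightarrow> npr (Poly_Mapping.lookup p M)" "size M = 3"
  shows "npr (Poly_Mapping.lookup (L_op p) M)"
proof -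
  have "npr (Poly_Mapping.lookup (L_mono m (Poly_Mapping.lookup p m)) M)" for m
  proof (cases "size m = 3")
    case True then show ?thesis using assms(1) npr_L_mono by blast
  next
    case False
    have "M \<notin> Poly_Mapping.keys (L_mono m (Poly_Mapping.lookup p m))"
    proof
      assume "M \<in> Poly_Mapping.keys (L_mono m (Poly_Mapping.lookup p m))"
      from L_mono_keys[OF this] have "size M = size m" by blast
      with False assms(2) show False by simp
    qed
    then show ?thesis by (simp add: not_in_keys_iff_lookup_eq_zero npr_0)
  qed
  then have "npr (Poly_Mapping.lookup (\<Sum>m\<in>Poly_Mapping.keys p. L_mono m (Poly_Mapping.lookup p m)) M)"
    by (intro npr_sum)
  then show ?thesis unfolding L_op_def lin_ext_def .
qed

lemma lookup_H3: assumes "\<forall>M\<in>Poly_Mapping.keys p. goodmon n M" "size M = 3"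
  shows "Poly_Mapping.lookup (H_op p) M = 0"
  unfolding H_op_def lookup_lin_ext
proof (rule sum.neutral, rule ballI)
  fix m assume m: "m \<in> Poly_Mapping.keys p"
  have "3 \<le> size m" using bspec[OF assms(1) m] unfolding goodmon_def by blast
  have "M \<notin> Poly_Mapping.keys (H_mono m (Poly_Mapping.lookup p m))"
  proof
    assume "M \<in> Poly_Mapping.keys (H_mono m (Poly_Mapping.lookup p m))"
    from H_size[OF this] \<open>3 \<le> size m\<close> assms(2) show False by simp
  qed
  then show "Poly_Mapping.lookup (H_mono m (Poly_Mapping.lookup p m)) M = 0"
    by (simp add: not_in_keys_iff_lookup_eq_zero)
qed

lemma Rinv_R: "Rinv m (R_poly m)"
proof (induction m)
  case 0 then show ?case by (simp add: Rinv_def npr_0)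
next
  case (Suc n)
  show ?case
  proof (cases "n < 2")
    case True then show ?thesis by (simp add: Rinv_def npr_0)
  next
    case False
    then have R: "R_poly (Suc n) = A_poly n + L_op (R_poly n) + H_op (R_poly n)" by simp
    have IH1: "\<forall>M\<in>Poly_Mapping.keys (R_poly n). goodmon n M"
      and IH2: "\<forall>M. size M = 3 \<longrightarrow> npr (Poly_Mapping.lookup (R_poly n) M)"
      using Suc.IH unfolding Rinv_def by auto
    have keys: "goodmon (Suc n) M" if "M \<in> Poly_Mapping.keys (R_poly (Suc n))" for M
    proof -
      have "M \<in> Poly_Mapping.keys (A_poly n + L_op (R_poly n)) \<union> Poly_Mapping.keys (H_op (R_poly n))"
        using that unfolding R by (rule subsetD[OF keys_add])
      then consider "M \<in> Poly_Mapping.keys (A_poly n)" | "M \<in> Poly_Mapping.keys (L_op (R_poly n))"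
        | "M \<in> Poly_Mapping.keys (H_op (R_poly n))" using subsetD[OF keys_add[of "A_poly n" "L_op (R_poly n)"]] by blast
      then show ?thesis
      proof cases
        case 1 then show ?thesis using A_good False by simp
      next
        case 2 then show ?thesis using keys_L IH1 by blast
      next
        case 3 then show ?thesis using keys_H IH1 by blast
      qed
    qed
    have np: "npr (Poly_Mapping.lookup (R_poly (Suc n)) M)" if "size M = 3" for M
    proof -
      have l2: "npr (Poly_Mapping.lookup (L_op (R_poly n)) M)" using npr_L IH2 that by blast
      have l3: "Poly_Mapping.lookup (H_op (R_poly n)) M = 0" using lookup_H3 IH1 that by blast
      show ?thesis unfolding R lookup_add l3 using npr_A l2 npr_add by simp
    qed
    show ?thesis unfolding Rinv_def using keys np by blast
  qed
qed

lemma lookup_a: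
  "Poly_Mapping.lookup (a_poly n) M' =
     (if count M' n = 0 then Poly_Mapping.lookup (R_poly (Suc n)) (add_mset n M') else 0)"
proof -
  define p where "p = R_poly (Suc n)"
  define S where "S = {m\<in>Poly_Mapping.keys p. count m n = 1}"
  have fS: "finite S" unfolding S_def by simp
  have a: "Poly_Mapping.lookup (a_poly n) M' = (\<Sum>m\<in>S. if m - {#n#} = M' then Poly_Mapping.lookup p m else 0)"
    unfolding a_poly_def Let_def p_def[symmetric] S_def[symmetric] lookup_sum lookup_single when_def by simp
  show ?thesis
  proof (cases "count M' n = 0")
    case True
    have "(\<Sum>m\<in>S. if m - {#n#} = M' then Poly_Mapping.lookup p m else 0)
        = (\<Sum>m\<in>S. if m = add_mset n M' then Poly_Mapping.lookup p m else 0)"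
    proof (rule sum.cong[OF refl])
      fix m assume "m \<in> S"
      then have "count m n = 1" unfolding S_def by blast
      then have nm: "n \<in># m" by (simp add: count_greater_zero_iff[symmetric])
      have "m - {#n#} = M' \<longleftrightarrow> m = add_mset n M'"
      proof
        assume "m - {#n#} = M'" then show "m = add_mset n M'" using nm by (metis insert_DiffM)
      next
        assume "m = add_mset n M'" then show "m - {#n#} = M'" by simp
      qed
      then show "(if m - {#n#} = M' then Poly_Mapping.lookup p m else 0) = (if m = add_mset n M' then Poly_Mapping.lookup p m else 0)"
        by simp
    qed
    also have "\<dots> = (if add_mset n M' \<in> S then Poly_Mapping.lookup p (add_mset n M') else 0)"
      using fS by simp
    also have "\<dots> = Poly_Mapping.lookup p (add_mset n M')"
      using True unfolding S_def by (auto simp: in_keys_iff)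
    finally show ?thesis using a True p_def by simp
  next
    case False
    have "(\<Sum>m\<in>S. if m - {#n#} = M' then Poly_Mapping.lookup p m else 0) = 0"
    proof (rule sum.neutral, rule ballI)
      fix m assume "m \<in> S"
      then have "count m n = 1" unfolding S_def by blast
      then have c0: "count (m - {#n#}) n = 0" by (simp only: count_diff count_single) simp
      have "m - {#n#} \<noteq> M'" using False c0 by metis
      then show "(if m - {#n#} = M' then Poly_Mapping.lookup p m else 0) = 0" by simp
    qed
    then have "Poly_Mapping.lookup (a_poly n) M' = 0" using a by simp
    then show ?thesis by (simp only: if_not_P[OF False])
  qed
qed

lemma size2: assumes "size M = 2" obtains a b where "M = {#a, b#}"
proof -
  obtain a N where "M = add_mset a N" using size_eq_Suc_imp_eq_union[of M 1] assms by auto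
  moreover then have "size N = 1" using assms by simp
  then obtain b where "N = {#b#}" using size_1_singleton_mset by blast
  ultimately show ?thesis using that by simp
qed

lemma a_key:
  assumes "M' \<in> Poly_Mapping.keys (a_poly n)"
  shows "\<exists>a b. M' = {#a,b#} \<and> a + b = n+2 \<and> 3 \<le> a \<and> a \<le> n-1 \<and> 3 \<le> b \<and> b \<le> n-1"
    and "Poly_Mapping.lookup (a_poly n) M' \<in> \<int>"
proof -
  define p where "p = R_poly (Suc n)"
  have nz: "Poly_Mapping.lookup (a_poly n) M' \<noteq> 0" using assms by (simp add: in_keys_iff)
  have c0: "count M' n = 0"
  proof (rule ccontr)
    assume "count M' n \<noteq> 0"
    then have "Poly_Mapping.lookup (a_poly n) M' = 0" unfolding lookup_a by (simp only: if_not_P if_False)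
    with nz show False by simp
  qed
  have la: "Poly_Mapping.lookup (a_poly n) M' = Poly_Mapping.lookup p (add_mset n M')"
    unfolding lookup_a p_def by (simp only: if_P[OF c0])
  have key: "add_mset n M' \<in> Poly_Mapping.keys p" using nz la by (simp add: in_keys_iff)
  have inv: "Rinv (Suc n) p" unfolding p_def by (rule Rinv_R)
  have g: "goodmon (Suc n) (add_mset n M')" using inv key unfolding Rinv_def by blast
  have g1: "3 \<le> Suc (size M')" and g2: "\<forall>i\<in># add_mset n M'. 2 \<le> i \<and> i + Suc (size M') \<le> Suc n + 2"
    and g3: "n + sum_mset M' = 2 * Suc n"
    using g unfolding goodmon_def by auto
  have "n + Suc (size M') \<le> Suc n + 2" using g2 by simp
  then have sz: "size M' = 2" using g1 by simp
  then obtain a b where ab: "M' = {#a, b#}" by (rule size2)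
  have nin: "n \<notin># M'" using c0 by (simp add: count_eq_zero_iff)
  have abin: "a \<in># M'" "b \<in># M'" using ab by auto
  have an: "a \<noteq> n" "b \<noteq> n" using nin abin by auto
  have "2 \<le> a \<and> a + 3 \<le> Suc n + 2" "2 \<le> b \<and> b + 3 \<le> Suc n + 2" using g2 ab sz by auto
  moreover have "a + b = n + 2" using g3 ab by simp
  ultimately show "\<exists>a b. M' = {#a,b#} \<and> a + b = n+2 \<and> 3 \<le> a \<and> a \<le> n-1 \<and> 3 \<le> b \<and> b \<le> n-1"
    using ab an by (intro exI[of _ a] exI[of _ b]) auto
  have "npr (Poly_Mapping.lookup p (add_mset n M'))" using inv sz unfolding Rinv_def by simp
  then show "Poly_Mapping.lookup (a_poly n) M' \<in> \<int>" using la by (simp add: npr_def)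
qed

lemma a_neg:
  assumes n: "5 \<le> n" and a: "3 \<le> a" "a \<le> n - 1"
  shows "Poly_Mapping.lookup (a_poly n) {#a, n + 2 - a#} < 0"
proof -
  define b where "b = n + 2 - a"
  have b: "3 \<le> b" "b \<le> n - 1" using a n by (auto simp: b_def)
  have c0: "count {#a, b#} n = 0" using a b n by auto
  have la: "Poly_Mapping.lookup (a_poly n) {#a, b#} = Poly_Mapping.lookup (R_poly (Suc n)) {#n, a, b#}"
    unfolding lookup_a by (simp only: if_P[OF c0])
  have R: "R_poly (Suc n) = A_poly n + L_op (R_poly n) + H_op (R_poly n)" using n by simp
  have inv: "Rinv n (R_poly n)" by (rule Rinv_R)
  have s3: "size {#n, a, b#} = 3" by simp
  have l2: "npr (Poly_Mapping.lookup (L_op (R_poly n)) {#n, a, b#})"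
    using npr_L[OF _ s3] inv unfolding Rinv_def by blast
  have l3: "Poly_Mapping.lookup (H_op (R_poly n)) {#n, a, b#} = 0"
    using lookup_H3[OF _ s3] inv unfolding Rinv_def by blast
  define f where "f k = (if {#1 + k, 1 + n - k, n#} = {#n, a, b#} then - rat_of_nat (n choose k) else 0)" for k
  have lA: "Poly_Mapping.lookup (A_poly n) {#n, a, b#} = (\<Sum>k\<in>{1..n-1}. f k)"
    unfolding A_poly_def lookup_sum lookup_single when_def f_def by simp
  have k: "a - 1 \<in> {1..n-1}" using a by auto
  have fk: "f (a - 1) = - rat_of_nat (n choose (a - 1))"
  proof -
    have "{#1 + (a - 1), 1 + n - (a - 1), n#} = {#n, a, b#}" using a b_def by auto
    then show ?thesis unfolding f_def by simp
  qed
  have "f (a - 1) < 0" using fk a by simp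
  moreover have "(\<Sum>k\<in>{1..n-1} - {a - 1}. f k) \<le> 0"
    by (rule sum_nonpos) (simp add: f_def)
  ultimately have "(\<Sum>k\<in>{1..n-1}. f k) < 0" using sum.remove[OF _ k, of f] by simp
  moreover have "Poly_Mapping.lookup (L_op (R_poly n)) {#n, a, b#} \<le> 0" using l2 by (simp add: npr_def)
  ultimately have "Poly_Mapping.lookup (R_poly (Suc n)) {#n, a, b#} < 0"
    unfolding R lookup_add l3 lA by simp
  then show ?thesis using la b_def by simp
qed

lemma polar_expand:
  "polar_form p x y = (\<Sum>M\<in>Poly_Mapping.keys p. of_rat (Poly_Mapping.lookup p M) *
      ((\<Prod>i\<in>#M. x i + y i) - (\<Prod>i\<in>#M. x i) - (\<Prod>i\<in>#M. y i))) / 2"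
  unfolding polar_form_def eval_tpoly_def
  by (simp add: sum_subtractf[symmetric] right_diff_distrib)

lemma nondeg:
  assumes n: "5 \<le> n"
  shows "nondegenerate_on {3..n-1} (a_poly n)"
  unfolding nondegenerate_on_def
proof (intro allI impI)
  fix x :: "nat \<Rightarrow> real" and i :: nat
  assume xs: "\<forall>i. i \<notin> {3..n-1} \<longrightarrow> x i = 0"
    and H: "\<forall>y. (\<forall>i. i \<notin> {3..n-1} \<longrightarrow> y i = 0) \<longrightarrow> polar_form (a_poly n) x y = 0"
  show "x i = 0"
  proof (cases "i \<in> {3..n-1}")
    case False then show ?thesis using xs by blast
  next
    case True
    define j where "j = n + 2 - i"
    have j: "3 \<le> j" "j \<le> n - 1" and ij: "i = n + 2 - j" using True n by (auto simp: j_def)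
    define y :: "nat \<Rightarrow> real" where "y k = (if k = j then 1 else 0)" for k
    have ys: "\<forall>k. k \<notin> {3..n-1} \<longrightarrow> y k = 0" using j by (auto simp: y_def)
    define P where "P = a_poly n"
    define g where "g M = of_rat (Poly_Mapping.lookup P M) *
      ((\<Prod>i\<in>#M. x i + y i) - (\<Prod>i\<in>#M. x i) - (\<Prod>i\<in>#M. y i))" for M
    define Mj where "Mj = {#j, i#}"
    have cneg: "Poly_Mapping.lookup P Mj < 0" unfolding P_def Mj_def ij using a_neg[OF n j] by simp
    then have Mjk: "Mj \<in> Poly_Mapping.keys P" by (simp add: in_keys_iff)
    have zero: "g M = 0" if M: "M \<in> Poly_Mapping.keys P - {Mj}" for M
    proof -
      obtain a b where ab: "M = {#a,b#}" "a + b = n+2" "3 \<le> a" "a \<le> n-1" "3 \<le> b" "b \<le> n-1"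
        using a_key(1)[of M n] M unfolding P_def by blast
      have "a \<noteq> j"
      proof
        assume "a = j" then have "M = Mj" using ab ij unfolding Mj_def by simp
        with M show False by blast
      qed
      moreover have "b \<noteq> j"
      proof
        assume "b = j" then have "M = Mj" using ab ij unfolding Mj_def by (simp add: add_mset_commute)
        with M show False by blast
      qed
      ultimately show ?thesis unfolding g_def ab(1) y_def by simp
    qed
    have "polar_form P x y = (\<Sum>M\<in>Poly_Mapping.keys P. g M) / 2"
      unfolding polar_expand g_def ..
    also have "(\<Sum>M\<in>Poly_Mapping.keys P. g M) = g Mj + (\<Sum>M\<in>Poly_Mapping.keys P - {Mj}. g M)"
      using sum.remove[OF _ Mjk, of g] by simp
    also have "(\<Sum>M\<in>Poly_Mapping.keys P - {Mj}. g M) = 0"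
      using zero by (rule sum.neutral[OF ballI])
    finally have pf: "polar_form P x y = g Mj / 2" by simp
    have "polar_form P x y = 0" using H ys unfolding P_def by blast
    with pf have g0: "g Mj = 0" by simp
    have "g Mj = of_rat (Poly_Mapping.lookup P Mj) * (if i = j then 2 else 1) * x i"
      unfolding g_def Mj_def y_def by (auto simp: algebra_simps)
    moreover have "of_rat (Poly_Mapping.lookup P Mj) \<noteq> (0::real)" using cneg by simp
    ultimately show ?thesis using g0 by (auto split: if_splits)
  qed
qed

theorem mainTheorem17:
  fixes n :: nat
  assumes "n \<ge> 5"
  shows "(\<forall>m\<in>Poly_Mapping.keys (a_poly n). set_mset m \<subseteq> {3..n-1} \<and> Poly_Mapping.lookup (a_poly n) m \<in> \<int>)
       \<and> (\<forall>m\<in>Poly_Mapping.keys (a_poly n). size m = 2)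
       \<and> nondegenerate_on {3..n-1} (a_poly n)"
proof (intro conjI ballI)
  fix m assume m: "m \<in> Poly_Mapping.keys (a_poly n)"
  obtain a b where ab: "m = {#a,b#}" "a + b = n+2" "3 \<le> a" "a \<le> n-1" "3 \<le> b" "b \<le> n-1"
    using a_key(1)[OF m] by blast
  show "set_mset m \<subseteq> {3..n-1}" using ab by auto
  show "Poly_Mapping.lookup (a_poly n) m \<in> \<int>" using a_key(2)[OF m] .
  show "size m = 2" using ab by simp
next
  show "nondegenerate_on {3..n-1} (a_poly n)" using nondeg assms by blast
qed

end
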